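(* For $a\in(0,1)$ and $x\in[0,1]$ define $$I(a,x):=-\int_0^{\pi}\operatorname{Im}\Bigl\{w_{a,x}(t)\Bigr\}\,\frac{dt}{\sqrt{a+1/a-2\cos t}},$$ where, with $z=e^{it}$, $w_{a,x}(t)=z^{1/4}\left(\frac{1-az}{z-a}\right)^{1/4}\left(\frac{z+x}{xz+1}\right)^{1/2}$, each root being the continuous branch along $t\in[0,\pi]$ taking the value $1$ at $t=0$. Let $\alpha\in(0,1)$ be the unique zero of $a\mapsto I(a,0)$ in $(0,1)$, and for each $a\in(0,\alpha)$ let $x_a\in(0,1)$ be the unique value of $x$ with $I(a,x_a)=0$. Then $\lim_{a\to0}x_a=1$.
   Context: It is established (independently of this statement) that $I(a,x)$ is increasing in $x$, that $a\mapsto I(a,0)$ has exactly one zero $\alpha$ in $(0,1)$, and that for each $a\in(0,\alpha)$ there is a unique $x_a\in(0,1)$ with $I(a,x_a)=0$. *)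

theory Defs
  imports "HOL-Analysis.Analysis"
begin

text \<open>Continuous branch along t in [0,pi) of the n-th root of g(t), taking value 1 at t = 0.
  Outside [0,pi) the function is set to 0 (so that it is uniquely determined);
  the single point t = pi is irrelevant for the integral.\<close>
definition cbranch :: "nat \<Rightarrow> (real \<Rightarrow> complex) \<Rightarrow> real \<Rightarrow> complex" where
  "cbranch n g = (THE h. continuous_on {0..<pi} h \<and> h 0 = 1
       \<and> (\<forall>s\<in>{0..<pi}. h s ^ n = g s) \<and> (\<forall>s. s \<notin> {0..<pi} \<longrightarrow> h s = 0))"

definition wfun :: "real \<Rightarrow> real \<Rightarrow> real \<Rightarrow> complex" where
  "wfun a x t =
     cbranch 4 (\<lambda>s. cis s) t
   * cbranch 4 (\<lambda>s. (1 - of_real a * cis s) / (cis s - of_real a)) t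
   * cbranch 2 (\<lambda>s. (cis s + of_real x) / (of_real x * cis s + 1)) t"

definition Ifun :: "real \<Rightarrow> real \<Rightarrow> real" where
  "Ifun a x = - integral {0..pi} (\<lambda>t. Im (wfun a x t) / sqrt (a + 1/a - 2 * cos t))"

end

theory Submission
  imports Defs
begin


lemma cbranch_eq:
  fixes h :: "real \<Rightarrow> complex"
  assumes n: "n > 0" and hc: "continuous_on {0..<pi} h" and h0: "h 0 = 1"
    and hp: "\<And>s. s \<in> {0..<pi} \<Longrightarrow> h s ^ n = g s"
    and hnz: "\<And>s. s \<in> {0..<pi} \<Longrightarrow> h s \<noteq> 0"
    and s: "s \<in> {0..<pi}"
  shows "cbranch n g s = h s"
proof -
  define H where "H = (\<lambda>s. if s \<in> {0..<pi} then h s else 0)"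
  have HP: "continuous_on {0..<pi} H \<and> H 0 = 1
       \<and> (\<forall>s\<in>{0..<pi}. H s ^ n = g s) \<and> (\<forall>s. s \<notin> {0..<pi} \<longrightarrow> H s = 0)"
    using hc h0 hp by (auto simp: H_def intro: continuous_on_cong[THEN iffD1, OF refl _ hc])
  have uniq: "k = H" if k: "continuous_on {0..<pi} k \<and> k 0 = 1
       \<and> (\<forall>s\<in>{0..<pi}. k s ^ n = g s) \<and> (\<forall>s. s \<notin> {0..<pi} \<longrightarrow> k s = 0)" for k
  proof
    fix s
    show "k s = H s"
    proof (cases "s \<in> {0..<pi}")
      case False thus ?thesis using k by (auto simp add: H_def)
    next
      case True
      define q where "q = (\<lambda>s. k s / h s)"
      have qc: "continuous_on {0..<pi} q" unfolding q_def
        using k hc hnz by (intro continuous_intros) auto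
      have qr: "q t ^ n = 1" if "t \<in> {0..<pi}" for t
        using k hp[OF that] hnz[OF that] that by (simp add: q_def power_divide) (metis power_not_zero)
      have "finite (q ` {0..<pi})"
        by (rule finite_subset[OF _ finite_roots_unity[of n]]) (use qr n in auto)
      hence "q constant_on {0..<pi}"
        by (intro continuous_finite_range_constant qc) (auto intro: is_interval_connected simp: is_interval_def)
      hence "q s = q 0" using True pi_gt_zero unfolding constant_on_def by force
      also have "q 0 = 1" using k h0 by (simp add: q_def)
      finally show ?thesis using True hnz[OF True] by (simp add: q_def H_def field_simps)
    qed
  qed
  have "cbranch n g = H" unfolding cbranch_def
    apply (rule the_equality) apply (rule HP) apply (erule uniq) done
  thus ?thesis using s by (simp add: H_def)
qed


lemma cont_cis: "continuous_on S (\<lambda>t. cis (f t))" if "continuous_on S f" for f :: "real \<Rightarrow> real"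
  unfolding cis_conv_exp by (intro continuous_intros that)

lemma cis_pow4: "cis (s/4) ^ 4 = cis s"
  using Complex.DeMoivre[of "s/4" 4] by simp

lemma b1: assumes "t \<in> {0..<pi}" shows "cbranch 4 (\<lambda>s. cis s) t = cis (t/4)"
  by (rule cbranch_eq) (use assms in \<open>auto simp: cis_pow4 intro!: cont_cis continuous_intros\<close>)

lemma key_half:
  fixes x y :: real
  shows "cis (2 * y) + of_real x = cis y * (of_real ((1+x)*cos y) + \<i> * of_real ((1-x)* sin y))"
    and "of_real x * cis (2 * y) + 1 = cis y * cnj (of_real ((1+x)*cos y) + \<i> * of_real ((1-x)* sin y))"
proof -
  have c: "cis (2 * y) = cis y * cis y" by (simp add: cis_mult)
  have q: "sin y * sin y + cos y * cos y = 1" using sin_cos_squared_add[of y] by (simp add: power2_eq_square)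
  show "cis (2 * y) + of_real x = cis y * (of_real ((1+x)*cos y) + \<i> * of_real ((1-x)* sin y))"
    unfolding c complex_eq_iff apply (simp add: algebra_simps) using q by algebra
  show "of_real x * cis (2 * y) + 1 = cis y * cnj (of_real ((1+x)*cos y) + \<i> * of_real ((1-x)* sin y))"
    unfolding c complex_eq_iff by (simp add: algebra_simps)
qed


lemma alg2:
  fixes z u :: complex
  assumes "z * cnj z = 1" "u = 1 - of_real a * z" "u \<noteq> 0" "z \<noteq> of_real a"
  shows "cnj z * (u / of_real (cmod u))^2 = u / (z - of_real a)"
proof -
  have n: "(of_real (cmod u))^2 = u * cnj u" by (metis complex_norm_square of_real_power)
  have cu0: "cnj u = 1 - of_real a * cnj z" using assms(2) by simp
  have "z * cnj u = z - of_real a * (z * cnj z)" by (simp add: cu0 algebra_simps)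
  hence cu: "z * cnj u = z - of_real a" using assms(1) by simp
  have cz: "cnj u \<noteq> 0" using assms(3) by simp
  have z0: "z \<noteq> 0" using assms(1) by auto
  have "(u / of_real (cmod u))^2 = u^2 / (of_real (cmod u))^2" by (simp add: power_divide)
  also have "\<dots> = u^2 / (u * cnj u)" by (simp only: n)
  also have "\<dots> = u / cnj u" using cz assms(3) by (simp add: power2_eq_square)
  finally have "(u / of_real (cmod u))^2 = u / cnj u" .
  moreover have "cnj z = 1 / z" using assms(1) z0 by (simp add: field_simps mult.commute)
  ultimately have "cnj z * (u / of_real (cmod u))^2 = (1/z) * (u / cnj u)" by simp
  also have "\<dots> = u / (z * cnj u)" by simp
  finally show ?thesis using cu by simp
qed

lemma p4: "(w::complex)^4 = (w^2)^2" by (simp add: eval_nat_numeral mult.assoc)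

lemma p4': "(A*(B::complex))^4 = A^4 * (B^2)^2" by (metis p4 power_mult_distrib)

lemma b2:
  assumes a: "0 < a" "a < 1" and t: "t \<in> {0..<pi}"
  shows "cbranch 4 (\<lambda>s. (1 - of_real a * cis s) / (cis s - of_real a)) t
     = cis (-t/4) * csqrt ((1 - of_real a * cis t) / of_real (cmod (1 - of_real a * cis t)))"
proof -
  define u where "u = (\<lambda>s. 1 - of_real a * cis s)"
  have Reu: "Re (u s) > 0" for s
  proof -
    have "a * cos s \<le> a" using a by (simp add: mult_left_le)
    hence "a * cos s < 1" using a by linarith
    thus ?thesis by (simp add: u_def)
  qed
  have u0: "u s \<noteq> 0" for s using Reu[of s] by auto
  have ReU: "Re (u s / of_real (cmod (u s))) > 0" for s
    using Reu[of s] u0[of s] by (simp add: divide_pos_pos)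
  have Unz: "u s / of_real (cmod (u s)) \<noteq> 0" for s using u0[of s] by simp
  have cont: "continuous_on {0..<pi} (\<lambda>s. csqrt (u s / of_real (cmod (u s))))"
  proof (rule continuous_on_compose2[OF continuous_on_csqrt])
    show "continuous_on {0..<pi} (\<lambda>s. u s / of_real (cmod (u s)))"
      unfolding u_def using u0 unfolding u_def by (intro continuous_intros cont_cis) auto
    show "(\<lambda>s. u s / of_real (cmod (u s))) ` {0..<pi} \<subseteq> - \<real>\<^sub>\<le>\<^sub>0"
    proof
      fix w assume "w \<in> (\<lambda>s. u s / of_real (cmod (u s))) ` {0..<pi}"
      then obtain s where w: "w = u s / of_real (cmod (u s))" by auto
      have "Re w > 0" using ReU[of s] w by simp
      thus "w \<in> - \<real>\<^sub>\<le>\<^sub>0" by (simp add: complex_nonpos_Reals_iff)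
    qed
  qed
  have pw: "(cis (-s/4) * csqrt (u s / of_real (cmod (u s))))^4 = (1 - of_real a * cis s) / (cis s - of_real a)" for s
  proof -
    have "(cis (-s/4) * csqrt (u s / of_real (cmod (u s))))^4
        = cis (-s/4)^4 * ((csqrt (u s / of_real (cmod (u s))))^2)^2"
      by (rule p4')
    also have "\<dots> = cnj (cis s) * (u s / of_real (cmod (u s)))^2"
      using cis_pow4[of "-s"] by (simp add: cis_cnj)
    also have "\<dots> = u s / (cis s - of_real a)"
    proof (rule alg2)
      show "cis s * cnj (cis s) = 1" by (simp add: cis_cnj cis_mult)
      show "u s = 1 - of_real a * cis s" by (simp add: u_def)
      show "u s \<noteq> 0" by (rule u0)
      show "cis s \<noteq> of_real a"
      proof
        assume "cis s = of_real a"
        hence "cmod (cis s) = cmod (of_real a)" by simp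
        thus False using a by simp
      qed
    qed
    finally show ?thesis by (simp add: u_def)
  qed
  have "cbranch 4 (\<lambda>s. (1 - of_real a * cis s) / (cis s - of_real a)) t
     = cis (-t/4) * csqrt (u t / of_real (cmod (u t)))"
  proof (rule cbranch_eq[where h="\<lambda>s. cis (-s/4) * csqrt (u s / of_real (cmod (u s)))"])
    show "continuous_on {0..<pi} (\<lambda>s. cis (-s/4) * csqrt (u s / of_real (cmod (u s))))"
      by (intro continuous_intros cont_cis cont) auto
    have e: "u 0 = of_real (1 - a)" by (simp add: u_def)
    have n: "cmod (of_real (1 - a)::complex) = 1 - a" unfolding norm_of_real using a by simp
    have nz: "(of_real (1 - a)::complex) \<noteq> 0" using a by (simp only: of_real_eq_0_iff)
    have "u 0 / of_real (cmod (u 0)) = 1" unfolding e n using nz by (rule divide_self)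
    thus "cis (-0/4) * csqrt (u 0 / of_real (cmod (u 0))) = 1" by simp
    show "\<And>s. s \<in> {0..<pi} \<Longrightarrow> (cis (-s/4) * csqrt (u s / of_real (cmod (u s))))^4
          = (1 - of_real a * cis s) / (cis s - of_real a)" by (rule pw)
    show "\<And>s. s \<in> {0..<pi} \<Longrightarrow> cis (-s/4) * csqrt (u s / of_real (cmod (u s))) \<noteq> 0"
      using Unz by simp
  qed (use t in simp_all)
  thus ?thesis by (simp only: u_def)
qed

lemma b3:
  assumes x: "0 \<le> x" "x < 1" and t: "t \<in> {0..<pi}"
  shows "cbranch 2 (\<lambda>s. (cis s + of_real x) / (of_real x * cis s + 1)) t
     = (of_real ((1+x)*cos (t/2)) + \<i> * of_real ((1-x)* sin (t/2)))
       / of_real (cmod (of_real ((1+x)*cos (t/2)) + \<i> * of_real ((1-x)* sin (t/2))))"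
proof -
  define V where "V = (\<lambda>s. of_real ((1+x)*cos (s/2)) + \<i> * of_real ((1-x)* sin (s/2)) :: complex)"
  have V0: "V s \<noteq> 0" for s
  proof
    assume "V s = 0"
    hence "cos (s/2) = 0" "sin (s/2) = 0" using x by (auto simp: V_def complex_eq_iff)
    thus False using sin_cos_squared_add[of "s/2"] by simp
  qed
  have pw: "(V s / of_real (cmod (V s)))^2 = (cis s + of_real x) / (of_real x * cis s + 1)" for s
  proof -
    have n: "(of_real (cmod (V s)))^2 = V s * cnj (V s)" by (metis complex_norm_square of_real_power)
    have cz: "cnj (V s) \<noteq> 0" using V0[of s] by simp
    have "(V s / of_real (cmod (V s)))^2 = (V s)^2 / (of_real (cmod (V s)))^2" by (simp add: power_divide)
    also have "\<dots> = (V s)^2 / (V s * cnj (V s))" by (simp only: n)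
    also have "\<dots> = V s / cnj (V s)" using cz V0[of s] by (simp add: power2_eq_square)
    also have "\<dots> = (cis (s/2) * V s) / (cis (s/2) * cnj (V s))" by simp
    also have "\<dots> = (cis s + of_real x) / (of_real x * cis s + 1)"
    proof -
      have e1: "cis s + of_real x = cis (s/2) * V s"
        using key_half(1)[where x=x and y="s/2"] unfolding V_def by simp
      have e2: "of_real x * cis s + 1 = cis (s/2) * cnj (V s)"
        using key_half(2)[where x=x and y="s/2"] unfolding V_def by simp
      show ?thesis unfolding e1 e2 ..
    qed
    finally show ?thesis .
  qed
  have "cbranch 2 (\<lambda>s. (cis s + of_real x) / (of_real x * cis s + 1)) t = V t / of_real (cmod (V t))"
  proof (rule cbranch_eq[where h="\<lambda>s. V s / of_real (cmod (V s))"])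
    have Vc: "continuous_on {0..<pi} V" unfolding V_def by (intro continuous_intros) auto
    show "continuous_on {0..<pi} (\<lambda>s. V s / of_real (cmod (V s)))"
      by (intro continuous_intros Vc) (use V0 in simp)
    have e: "V 0 = of_real (1+x)" by (simp add: V_def)
    have n: "cmod (of_real (1+x)::complex) = 1 + x" unfolding norm_of_real using x by simp
    have nz: "(of_real (1+x)::complex) \<noteq> 0" using x by (simp only: of_real_eq_0_iff)
    show "V 0 / of_real (cmod (V 0)) = 1" unfolding e n using nz by (rule divide_self)
    show "\<And>s. s \<in> {0..<pi} \<Longrightarrow> (V s / of_real (cmod (V s)))^2 = (cis s + of_real x) / (of_real x * cis s + 1)"
      by (rule pw)
    show "\<And>s. s \<in> {0..<pi} \<Longrightarrow> V s / of_real (cmod (V s)) \<noteq> 0" using V0 by simp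
  qed (use t in simp_all)
  thus ?thesis by (simp only: V_def)
qed


lemma ineq:
  fixes c d X Y :: real
  assumes "c > 0" "d \<le> 0" "c^2 - d^2 > 0" "X \<ge> 0" "Y \<ge> 0" "Y * (c^2 - d^2) \<ge> -(2*c*d) * X"
  shows "c*Y + d*X \<ge> 0" and "X > 0 \<Longrightarrow> d < 0 \<Longrightarrow> c*Y + d*X > 0"
proof -
  have dX: "0 \<le> (-d)*X" using assms by (intro mult_nonneg_nonneg) auto
  have cd: "c^2 - d^2 \<le> 2*c^2" using assms by (simp add: power2_eq_square)
  have A: "(-d*X) * (c^2 - d^2) \<le> (-d*X) * (2*c^2)"
    using mult_left_mono[OF cd dX] by simp
  have B: "c * (Y * (c^2 - d^2)) \<ge> c * (-(2*c*d) * X)" using assms by (intro mult_left_mono) auto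
  have "(c*Y + d*X) * (c^2 - d^2) \<ge> 0"
    using A B by (simp add: algebra_simps power2_eq_square)
  thus "c*Y + d*X \<ge> 0" using assms(3) by (simp add: zero_le_mult_iff)
  assume X: "X > 0" and d: "d < 0"
  have dXp: "0 < (-d)*X" using X d by (intro mult_pos_pos) auto
  have cd': "c^2 - d^2 < 2*c^2"
  proof -
    have "d^2 \<ge> 0" "c^2 > 0" using assms(1) by auto
    thus ?thesis by linarith
  qed
  have A': "(-d*X) * (c^2 - d^2) < (-d*X) * (2*c^2)"
    using mult_strict_left_mono[OF cd' dXp] by simp
  have "(c*Y + d*X) * (c^2 - d^2) > 0"
    using A' B by (simp add: algebra_simps power2_eq_square)
  thus "c*Y + d*X > 0" using assms(3) by (simp add: zero_less_mult_iff)
qed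


lemma trig:
  fixes a x t :: real
  assumes a: "0 < a" "a \<le> 1/2" and x: "0 \<le> x" "8*a \<le> 1-x" and t: "0 \<le> t" "t \<le> pi"
  shows "(1-x)* sin(t/2)*(1 - a*cos t) \<ge> a* sin t*((1+x)*cos(t/2))"
proof -
  have st: "sin t = 2 * sin (t/2) * cos (t/2)" using sin_double[of "t/2"] by simp
  have s2: "sin (t/2) \<ge> 0" using t by (intro sin_ge_zero) auto
  have c2: "cos (t/2) \<ge> 0" using t by (intro cos_ge_zero) auto
  have c2': "cos (t/2) \<le> 1" by simp
  have cc: "cos (t/2) * cos (t/2) \<le> 1" using c2 c2' by (metis mult_le_one)
  have ct: "cos t \<le> 1" by simp
  have "(1-x)*(1 - a*cos t) \<ge> (1-x)*(1-a)"
    using a x ct by (intro mult_left_mono) (auto simp: mult_left_le)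
  moreover have "(1-x)*(1-a) \<ge> 4*a"
  proof -
    have "(8*a)*(1/2) \<le> (1-x)*(1-a)" using a x by (intro mult_mono) auto
    thus ?thesis by simp
  qed
  moreover have "2*a*(cos (t/2) * cos (t/2))*(1+x) \<le> 4*a"
  proof -
    have "2*a*(cos (t/2) * cos (t/2)) \<le> 2*a*1" using mult_left_mono[OF cc, of "2*a"] a by simp
    hence m1: "2*a*(cos (t/2) * cos (t/2)) \<le> 2*a" by simp
    have m2: "1 + x \<le> 2" using a x by linarith
    have "2*a*(cos (t/2) * cos (t/2))*(1+x) \<le> 2*a*2"
      by (rule mult_mono[OF m1 m2]) (use a x in auto)
    thus ?thesis by simp
  qed
  ultimately have "(1-x)*(1 - a*cos t) \<ge> 2*a*(cos (t/2) * cos (t/2))*(1+x)" by linarith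
  hence "sin (t/2) * ((1-x)*(1 - a*cos t)) \<ge> sin (t/2) * (2*a*(cos (t/2) * cos (t/2))*(1+x))"
    using s2 by (intro mult_left_mono) auto
  thus ?thesis unfolding st by (simp add: algebra_simps)
qed


lemma impos:
  fixes a x t :: real
  assumes a: "0 < a" "a \<le> 1/2" and x: "0 \<le> x" "8*a \<le> 1-x" and t: "0 \<le> t" "t \<le> pi"
  defines "u \<equiv> 1 - of_real a * cis t"
  defines "U \<equiv> u / of_real (cmod u)"
  defines "V \<equiv> of_real ((1+x)*cos (t/2)) + \<i> * of_real ((1-x)* sin (t/2))"
  shows "Im (csqrt U * (V / of_real (cmod V))) \<ge> 0"
    and "0 < t \<Longrightarrow> t < pi \<Longrightarrow> Im (csqrt U * (V / of_real (cmod V))) > 0"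
proof -
  define c where "c = Re (csqrt U)"
  define d where "d = Im (csqrt U)"
  define X where "X = (1+x)*cos (t/2)"
  define Y where "Y = (1-x)* sin (t/2)"
  have x1: "x < 1" using a x by linarith
  have acos: "a * cos t \<le> a" using a by (simp add: mult_left_le)
  have Reu: "Re u = 1 - a * cos t" "Im u = - (a * sin t)" by (simp_all add: u_def)
  have Reu0: "Re u > 0" using Reu acos a by linarith
  hence nu: "cmod u > 0" by auto
  have ReU: "Re U = Re u / cmod u" "Im U = Im u / cmod u" by (simp_all add: U_def)
  have sq: "c^2 - d^2 = Re U" "2*c*d = Im U"
    using Re_power2[of "csqrt U"] Im_power2[of "csqrt U"] by (simp_all add: c_def d_def)
  have ReU0: "Re U > 0" using ReU Reu0 nu by simp
  have c0: "c > 0"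
  proof -
    have "c \<ge> 0" unfolding c_def by (rule Re_csqrt)
    moreover have "c \<noteq> 0"
    proof
      assume "c = 0" hence "Re U = -(d^2)" using sq by simp
      thus False using ReU0 by (smt (verit) zero_le_power2)
    qed
    ultimately show ?thesis by simp
  qed
  have sint: "sin t \<ge> 0" using t by (intro sin_ge_zero)
  have ImU: "Im U \<le> 0" using ReU Reu nu a sint by (simp add: divide_nonpos_pos)
  have d0: "d \<le> 0"
  proof (rule ccontr)
    assume "\<not> d \<le> 0" hence "2*c*d > 0" using c0 by simp
    thus False using sq ImU by simp
  qed
  have X0: "X \<ge> 0" unfolding X_def using x t by (intro mult_nonneg_nonneg cos_ge_zero) auto
  have Y0: "Y \<ge> 0" unfolding Y_def using x1 t by (intro mult_nonneg_nonneg sin_ge_zero) auto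
  have tr: "Y * Re u \<ge> - Im u * X"
    using trig[OF a x t] unfolding Reu X_def Y_def by (simp add: algebra_simps)
  have cond: "Y * (c^2 - d^2) \<ge> -(2*c*d) * X"
  proof -
    have "Y * Re u / cmod u \<ge> - Im u * X / cmod u" by (rule divide_right_mono[OF tr]) (use nu in simp)
    thus ?thesis unfolding sq ReU by (simp add: algebra_simps)
  qed
  have V0: "V \<noteq> 0"
  proof
    assume "V = 0"
    hence "cos (t/2) = 0" "sin (t/2) = 0" using x x1 by (auto simp: V_def complex_eq_iff)
    thus False using sin_cos_squared_add[of "t/2"] by simp
  qed
  hence nV: "cmod V > 0" by simp
  have im: "Im (csqrt U * (V / of_real (cmod V))) = (c*Y + d*X) / cmod V"
    by (simp add: c_def d_def X_def Y_def V_def Im_divide_of_real algebra_simps)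
  show "Im (csqrt U * (V / of_real (cmod V))) \<ge> 0"
    unfolding im using ineq(1)[OF c0 d0 _ X0 Y0 cond] ReU0 sq nV by simp
  assume t': "0 < t" "t < pi"
  have Xp: "X > 0" unfolding X_def using x t' by (intro mult_pos_pos cos_gt_zero) auto
  have sint': "sin t > 0" using t' by (intro sin_gt_zero)
  have "Im U < 0" using ReU Reu nu a sint' by (simp add: divide_neg_pos)
  hence dn: "d < 0" using sq c0 d0 by (cases "d = 0") auto
  show "Im (csqrt U * (V / of_real (cmod V))) > 0"
    unfolding im using ineq(2)[OF c0 d0 _ X0 Y0 cond Xp dn] ReU0 sq nV by simp
qed


lemma w_eq:
  assumes a: "0 < a" "a < 1" and x: "0 \<le> x" "x < 1" and t: "t \<in> {0..<pi}"
  shows "wfun a x t = csqrt ((1 - of_real a * cis t) / of_real (cmod (1 - of_real a * cis t)))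
     * ((of_real ((1+x)*cos (t/2)) + \<i> * of_real ((1-x)* sin (t/2)))
       / of_real (cmod (of_real ((1+x)*cos (t/2)) + \<i> * of_real ((1-x)* sin (t/2)))))"
proof -
  have "cis (t/4) * cis (-t/4) = 1" by (simp add: cis_mult)
  thus ?thesis unfolding wfun_def b1[OF t] b2[OF a t] b3[OF x t]
    by (simp add: mult.assoc)
qed

lemma Ineg:
  assumes a: "0 < a" "a \<le> 1/2" and x: "0 \<le> x" "8*a \<le> 1-x"
  shows "Ifun a x < 0"
proof -
  have a1: "a < 1" using a by linarith
  have x1: "x < 1" using a x by linarith
  define uu where "uu = (\<lambda>t. 1 - of_real a * cis t)"
  define UU where "UU = (\<lambda>t. uu t / of_real (cmod (uu t)))"
  define VV where "VV = (\<lambda>t::real. of_real ((1+x)*cos (t/2)) + \<i> * of_real ((1-x)* sin (t/2)))"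
  define D where "D = (\<lambda>t. sqrt (a + 1/a - 2*cos t))"
  define g where "g = (\<lambda>t. Im (csqrt (UU t) * (VV t / of_real (cmod (VV t)))) / D t)"
  define f where "f = (\<lambda>t. Im (wfun a x t) / sqrt (a + 1/a - 2 * cos t))"
  have Dpos: "D t > 0" for t
  proof -
    have "a + 1/a - 2 = (1-a)^2 / a" using a by (simp add: field_simps power2_eq_square)
    moreover have "(1-a)^2 / a > 0" using a a1 by simp
    moreover have "cos t \<le> 1" by simp
    ultimately have "a + 1/a - 2*cos t > 0" by linarith
    thus ?thesis by (simp add: D_def)
  qed
  have Reu: "Re (uu t) > 0" for t
  proof -
    have "a * cos t \<le> a" using a by (simp add: mult_left_le)
    thus ?thesis using a1 by (simp add: uu_def)
  qed
  have u0: "uu t \<noteq> 0" for t using Reu[of t] by auto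
  have ReU: "Re (UU t) > 0" for t using Reu[of t] u0[of t] by (simp add: UU_def)
  have V0: "VV t \<noteq> 0" for t
  proof
    assume "VV t = 0"
    hence "cos (t/2) = 0" "sin (t/2) = 0" using x x1 by (auto simp: VV_def complex_eq_iff)
    thus False using sin_cos_squared_add[of "t/2"] by simp
  qed
  have gc: "continuous_on {0..pi} g"
  proof -
    have c1: "continuous_on {0..pi} (\<lambda>t. csqrt (UU t))"
    proof (rule continuous_on_compose2[OF continuous_on_csqrt])
      show "continuous_on {0..pi} UU" unfolding UU_def uu_def using u0 unfolding uu_def
        by (intro continuous_intros cont_cis) auto
      show "UU ` {0..pi} \<subseteq> - \<real>\<^sub>\<le>\<^sub>0"
        using ReU by (auto simp: complex_nonpos_Reals_iff) (metis less_irrefl not_le)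
    qed
    have Vc: "continuous_on {0..pi} VV" unfolding VV_def by (intro continuous_intros) auto
    have c2: "continuous_on {0..pi} (\<lambda>t. VV t / of_real (cmod (VV t)))"
      by (intro continuous_intros Vc) (use V0 in simp)
    have c3: "continuous_on {0..pi} D" unfolding D_def by (intro continuous_intros)
    show ?thesis unfolding g_def
      by (intro continuous_intros c1 c2 c3) (use Dpos in \<open>auto simp: less_le\<close>)
  qed
  have gnn: "g t \<ge> 0" if "t \<in> {0..pi}" for t
  proof -
    have t: "0 \<le> t" "t \<le> pi" using that by auto
    show ?thesis unfolding g_def UU_def uu_def VV_def
      by (rule divide_nonneg_pos[OF impos(1)[OF a x t] Dpos])
  qed
  have gpos: "g t > 0" if "0 < t" "t < pi" for t
  proof -
    have t: "0 \<le> t" "t \<le> pi" using that by auto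
    show ?thesis unfolding g_def UU_def uu_def VV_def
      by (rule divide_pos_pos[OF impos(2)[OF a x t that] Dpos])
  qed
  have fg: "integral {0..pi} f = integral {0..pi} g"
  proof (rule integral_spike[of "{pi}"])
    fix t assume "t \<in> {0..pi} - {pi}"
    hence t: "t \<in> {0..<pi}" by auto
    show "g t = f t"
      unfolding f_def g_def D_def UU_def uu_def VV_def w_eq[OF a(1) a1 x(1) x1 t] ..
  qed auto
  have gi: "g integrable_on {0..pi}" by (rule integrable_continuous_interval[OF gc])
  have nn: "integral {0..pi} g \<ge> 0"
    by (rule Henstock_Kurzweil_Integration.integral_nonneg[OF gi]) (rule gnn)
  have "integral {0..pi} g \<noteq> 0"
  proof
    assume z: "integral {0..pi} g = 0"
    have "(g has_integral 0) (cbox 0 pi)"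
      using integrable_integral[OF gi] z by (simp add: cbox_interval)
    hence "g (pi/2) = 0"
      apply (intro has_integral_0_cbox_imp_0[where a=0 and b=pi and f=g and x="pi/2"])
      subgoal using gc by (simp add: cbox_interval)
      subgoal using gnn by (auto simp: box_real)
      subgoal by assumption
      subgoal by (simp add: box_real pi_gt_zero not_le)
      subgoal using pi_gt_zero by (simp add: cbox_interval)
      done
    thus False using gpos[of "pi/2"] by simp
  qed
  hence "integral {0..pi} g > 0" using nn by simp
  thus ?thesis unfolding Ifun_def using fg by (simp add: f_def)
qed

theorem lemma6p1:
  fixes \<alpha> :: real and xa :: "real \<Rightarrow> real"
  assumes alpha: "0 < \<alpha>" "\<alpha> < 1" "Ifun \<alpha> 0 = 0"
    and alpha_unique: "\<And>a. 0 < a \<Longrightarrow> a < 1 \<Longrightarrow> Ifun a 0 = 0 \<Longrightarrow> a = \<alpha>"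
    and xa: "\<And>a. 0 < a \<Longrightarrow> a < \<alpha> \<Longrightarrow> 0 < xa a \<and> xa a < 1 \<and> Ifun a (xa a) = 0"
    and xa_unique: "\<And>a x. 0 < a \<Longrightarrow> a < \<alpha> \<Longrightarrow> 0 < x \<Longrightarrow> x < 1 \<Longrightarrow> Ifun a x = 0 \<Longrightarrow> x = xa a"
  shows "(xa \<longlongrightarrow> 1) (at_right 0)"
proof (rule tendstoI)
  fix e :: real assume e: "e > 0"
  define \<delta> where "\<delta> = min \<alpha> (min (1/2) (e/8))"
  have dpos: "\<delta> > 0" using alpha e by (simp add: \<delta>_def)
  show "\<forall>\<^sub>F a in at_right 0. dist (xa a) 1 < e"
    unfolding eventually_at_right[OF dpos]
  proof (intro exI conjI allI impI)
    show "(0::real) < \<delta>" by (rule dpos)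
    fix a :: real assume "0 < a" "a < \<delta>"
    hence a: "0 < a" "a < \<alpha>" "a \<le> 1/2" "8*a < e" by (auto simp: \<delta>_def)
    have X: "0 < xa a" "xa a < 1" "Ifun a (xa a) = 0" using xa[OF a(1,2)] by auto
    have "xa a > 1 - e"
    proof (rule ccontr)
      assume "\<not> xa a > 1 - e"
      hence "8*a \<le> 1 - xa a" using a by linarith
      hence "Ifun a (xa a) < 0" using Ineg[OF a(1) a(3)] X(1) by (meson less_imp_le)
      thus False using X by simp
    qed
    thus "dist (xa a) 1 < e" using X by (simp add: dist_real_def)
  qed
qed

end
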